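(* Let $(\mathcal{X},d)$ be a Polish metric space and let $(X_N)_{N\in\mathbb{N}}$ be a Markov chain on $\mathcal{X}$ with transition kernel $(P_x)_{x\in\mathcal{X}}$, where $x\mapsto P_x$ is measurable and each $P_x$ has finite first moment. Assume there exists $\kappa>0$ such that $W_1(P_x,P_y)\le(1-\kappa)\,d(x,y)$ for all $x,y\in\mathcal{X}$, and let $\pi$ be the invariant probability measure. Let $T\ge1$, $T_0\ge0$ be integers and $\hat\pi(f):=\frac1T\sum_{k=T_0+1}^{T_0+T}f(X_k)$. Assume $\sup_{x\in\mathcal{X}}\sigma(x)^2/n_x<\infty$. Then for every Lipschitz $f:\mathcal{X}\to\mathbb{R}$ and every starting point $x\in\mathcal{X}$, \[ \operatorname{Var}_x\hat\pi(f)\le \begin{cases} \dfrac{\|f\|_{\mathrm{Lip}}^2}{\kappa T}\sup_{y\in\mathcal{X}}\dfrac{\sigma(y)^2}{n_y\kappa}, & \text{if } T_0=0,\\[2mm] \dfrac{\|f\|_{\mathrm{Lip}}^2}{\kappa T}\Big(1+\dfrac{1}{\kappa T}\Big)\sup_{y\in\mathcal{X}}\dfrac{\sigma(y)^2}{n_y\kappa}, & \text{otherwise.} \end{cases} \]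
   Context: $W_1$ is the $L^1$ Wasserstein distance (infimum over couplings of $\int d(x,y)\,\xi(dx,dy)$). $\operatorname{Var}_x$ is the variance for the chain started at $X_0=x$. The coarse diffusion constant is $\sigma(x)^2:=\frac12\iint d(y,z)^2P_x(dy)P_x(dz)$, and the local dimension is $n_x:=\inf\{\iint d(y,z)^2P_x(dy)P_x(dz)\,/\,\iint|f(y)-f(z)|^2P_x(dy)P_x(dz)\ :\ f:\mathcal{X}\to\mathbb{R}\ 1\text{-Lipschitz}\}$ ($\ge1$). $\|f\|_{\mathrm{Lip}}:=\sup_{x\ne y}|f(x)-f(y)|/d(x,y)$. *)

theory Defs
  imports "HOL-Probability.Probability"
begin

definition couplings :: "'a::metric_space measure \<Rightarrow> 'a measure \<Rightarrow> ('a \<times> 'a) measure set" where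
  "couplings \<mu> \<nu> = {\<xi>. prob_space \<xi> \<and> sets \<xi> = sets (borel \<Otimes>\<^sub>M borel)
      \<and> distr \<xi> borel fst = \<mu> \<and> distr \<xi> borel snd = \<nu>}"

definition W1 :: "'a::metric_space measure \<Rightarrow> 'a measure \<Rightarrow> ennreal" where
  "W1 \<mu> \<nu> = (INF \<xi> \<in> couplings \<mu> \<nu>. \<integral>\<^sup>+ p. ennreal (dist (fst p) (snd p)) \<partial>\<xi>)"

definition lip_norm :: "('a::metric_space \<Rightarrow> real) \<Rightarrow> real" where
  "lip_norm f = (SUP p \<in> {p. fst p \<noteq> snd p}. dist (f (fst p)) (f (snd p)) / dist (fst p) (snd p))"

definition dsq :: "('a::metric_space \<Rightarrow> 'a measure) \<Rightarrow> 'a \<Rightarrow> ennreal" where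
  "dsq K x = (\<integral>\<^sup>+ y. \<integral>\<^sup>+ z. ennreal ((dist y z)\<^sup>2) \<partial>K x \<partial>K x)"

definition fsq :: "('a::metric_space \<Rightarrow> 'a measure) \<Rightarrow> ('a \<Rightarrow> real) \<Rightarrow> 'a \<Rightarrow> ennreal" where
  "fsq K f x = (\<integral>\<^sup>+ y. \<integral>\<^sup>+ z. ennreal ((f y - f z)\<^sup>2) \<partial>K x \<partial>K x)"

definition coarse_sigma2 :: "('a::metric_space \<Rightarrow> 'a measure) \<Rightarrow> 'a \<Rightarrow> ennreal" where
  "coarse_sigma2 K x = dsq K x / 2"

text \<open>Local dimension n_x: infimum over 1-Lipschitz f of the ratio; a ratio with zero
  denominator is taken to be infinite (so e.g. a Dirac kernel has n_x = \<infinity>, sigma^2/n_x = 0).\<close>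
definition local_dim :: "('a::metric_space \<Rightarrow> 'a measure) \<Rightarrow> 'a \<Rightarrow> ennreal" where
  "local_dim K x = (INF f \<in> {f. 1-lipschitz_on UNIV f}.
      (if fsq K f x = 0 then \<top> else dsq K x / fsq K f x))"

text \<open>Law of the trajectory (X_0, ..., X_n) of the chain with kernel K started at X_0 = x,
  as a measure on functions extensional on {0..n}.\<close>
fun path :: "('a::metric_space \<Rightarrow> 'a measure) \<Rightarrow> 'a \<Rightarrow> nat \<Rightarrow> (nat \<Rightarrow> 'a) measure" where
  "path K x 0 = return (PiM {0} (\<lambda>_. borel)) (\<lambda>i\<in>{0}. x)"
| "path K x (Suc n) = path K x n \<bind>
     (\<lambda>\<omega>. distr (K (\<omega> n)) (PiM {0..Suc n} (\<lambda>_. borel)) (\<lambda>y. (restrict \<omega> {0..n})(Suc n := y)))"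

definition var :: "'b measure \<Rightarrow> ('b \<Rightarrow> real) \<Rightarrow> real" where
  "var M g = (\<integral>\<omega>. (g \<omega> - (\<integral>\<omega>'. g \<omega>' \<partial>M))\<^sup>2 \<partial>M)"

end

theory Submission
  imports Defs "HOL-Probability.Probability"
begin


lemma kernel_meas:
  fixes K :: "'a::polish_space \<Rightarrow> 'a measure"
  assumes K_meas: "K \<in> borel \<rightarrow>\<^sub>M prob_algebra borel"
  shows "(\<lambda>\<omega>. distr (K (\<omega> n)) (PiM {0..Suc n} (\<lambda>_. borel)) (\<lambda>y. (restrict \<omega> {0..n})(Suc n := y)))
     \<in> PiM {0..n} (\<lambda>_. borel) \<rightarrow>\<^sub>M prob_algebra (PiM {0..Suc n} (\<lambda>_. borel))"
proof (rule measurable_distr_prob_space2)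
  show "(\<lambda>\<omega>. K (\<omega> n)) \<in> PiM {0..n} (\<lambda>_. borel) \<rightarrow>\<^sub>M prob_algebra borel"
    using K_meas by measurable
  show "(\<lambda>(\<omega>, y). (restrict \<omega> {0..n})(Suc n := y)) \<in> PiM {0..n} (\<lambda>_. borel) \<Otimes>\<^sub>M borel \<rightarrow>\<^sub>M PiM {0..Suc n} (\<lambda>_. borel)"
    apply (rule measurable_PiM_single')
    subgoal for i
    proof (cases "i = Suc n")
      case True then show ?thesis by (simp add: case_prod_beta)
    next
      case False
      assume "i \<in> {0..Suc n}"
      with False have i: "i \<in> {0..n}" by auto
      have "(\<lambda>p. fst p i) \<in> PiM {0..n} (\<lambda>_. borel) \<Otimes>\<^sub>M (borel::'a measure) \<rightarrow>\<^sub>M borel"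
        using i by measurable
      then show ?thesis
        by (subst measurable_cong[where g="\<lambda>p. fst p i"]) (use False i in \<open>auto simp: case_prod_beta\<close>)
    qed
    subgoal by (auto simp: PiE_def extensional_def restrict_def space_pair_measure)
    done
qed

lemma path_space:
  fixes K :: "'a::polish_space \<Rightarrow> 'a measure"
  assumes K_meas: "K \<in> borel \<rightarrow>\<^sub>M prob_algebra borel"
  shows "path K x n \<in> space (prob_algebra (PiM {0..n} (\<lambda>_. borel)))"
proof (induction n)
  case 0
  have "return (PiM {0} (\<lambda>_. borel)) (\<lambda>i\<in>{0}. x) \<in> space (prob_algebra (PiM {0} (\<lambda>_. borel)))"
    by (auto simp: space_prob_algebra intro!: prob_space_return simp: space_PiM)
  then show ?case by simp
next
  case (Suc n)
  have "path K x (Suc n) = path K x n \<bind>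
     (\<lambda>\<omega>. distr (K (\<omega> n)) (PiM {0..Suc n} (\<lambda>_. borel)) (\<lambda>y. (restrict \<omega> {0..n})(Suc n := y)))" by (rule path.simps(2))
  moreover have "prob_space \<dots>" by (rule prob_space_bind'[OF Suc kernel_meas[OF K_meas]])
  moreover have "sets \<dots> = sets (PiM {0..Suc n} (\<lambda>_. borel))" by (rule sets_bind'[OF Suc kernel_meas[OF K_meas]])
  ultimately show ?case by (simp add: space_prob_algebra)
qed


lemma lip_borel: "C-lipschitz_on UNIV (h::'a::metric_space \<Rightarrow> real) \<Longrightarrow> h \<in> borel_measurable borel"
  by (intro borel_measurable_continuous_onI lipschitz_on_continuous_on)

context
  fixes K :: "'a::polish_space \<Rightarrow> 'a measure" and \<kappa> :: real
  assumes K_meas: "K \<in> borel \<rightarrow>\<^sub>M prob_algebra borel"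
    and first_moment: "\<And>y. (\<integral>\<^sup>+ z. ennreal (dist y z) \<partial>K y) < \<top>"
    and contraction: "\<And>y z. enn2ereal (W1 (K y) (K z)) \<le> ereal ((1 - \<kappa>) * dist y z)"
begin

lemma K_prob: "prob_space (K y)" and K_sets: "sets (K y) = sets borel"
  using measurable_space[OF K_meas, of y] by (auto simp: space_prob_algebra)

lemma K_space: "space (K y) = UNIV"
  using sets_eq_imp_space_eq[OF K_sets] by simp

lemma K_meas_sub: "h \<in> borel_measurable borel \<Longrightarrow> h \<in> borel_measurable (K y)"
  using measurable_cong_sets[OF K_sets refl] by blast

lemma lip_integrable:
  fixes h :: "'a \<Rightarrow> real"
  assumes h: "C-lipschitz_on UNIV h"
  shows "integrable (K y) h"
proof -
  have hm: "h \<in> borel_measurable (K y)" by (rule K_meas_sub[OF lip_borel[OF h]])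
  interpret prob_space "K y" by (rule K_prob)
  have di: "integrable (K y) (\<lambda>z. dist y z)"
    by (rule integrableI_bounded) (auto intro!: K_meas_sub simp: first_moment)
  have "integrable (K y) (\<lambda>z. \<bar>h y\<bar> + C * dist y z)"
    using di by auto
  then show ?thesis
  proof (rule Bochner_Integration.integrable_bound)
    show "h \<in> borel_measurable (K y)" by (rule hm)
    show "AE z in K y. norm (h z) \<le> norm (\<bar>h y\<bar> + C * dist y z)"
    proof (rule AE_I2)
      fix z
      have "dist (h y) (h z) \<le> C * dist y z" using lipschitz_onD[OF h] by auto
      moreover have "0 \<le> C" using lipschitz_on_nonneg[OF h] .
      ultimately show "norm (h z) \<le> norm (\<bar>h y\<bar> + C * dist y z)"
        by (auto simp: dist_real_def)
    qed
  qed
qed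

lemma W1_le: "W1 (K y) (K z) \<le> ennreal ((1 - \<kappa>) * dist y z) \<and> 0 \<le> (1 - \<kappa>) * dist y z"
  using contraction[of y z]
  by (metis enn2ereal_ennreal ennreal_le_iff ereal_less_eq(3) ennreal_inj zero_order(2) ennreal_le_iff2 less_eq_ennreal.rep_eq le_ereal_le zero_ennreal.rep_eq zero_ereal_def enn2ereal_nonneg ennreal_eq_0_iff)

lemma coupling_bound:
  fixes h :: "'a \<Rightarrow> real"
  assumes h: "C-lipschitz_on UNIV h" and \<xi>: "\<xi> \<in> couplings (K y) (K z)"
  shows "ennreal \<bar>(\<integral>w. h w \<partial>K y) - (\<integral>w. h w \<partial>K z)\<bar> \<le> ennreal C * (\<integral>\<^sup>+ p. ennreal (dist (fst p) (snd p)) \<partial>\<xi>)"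
proof -
  have hb: "h \<in> borel_measurable borel" by (rule lip_borel[OF h])
  have C0: "0 \<le> C" using lipschitz_on_nonneg[OF h] .
  from \<xi> have ps: "prob_space \<xi>" and sx: "sets \<xi> = sets (borel \<Otimes>\<^sub>M borel)"
    and d1: "distr \<xi> borel fst = K y" and d2: "distr \<xi> borel snd = K z"
    by (auto simp: couplings_def)
  have fm: "fst \<in> \<xi> \<rightarrow>\<^sub>M (borel :: 'a measure)"
    using measurable_cong_sets[OF sx refl] measurable_fst[of "borel::'a measure" "borel::'a measure"] by blast
  have sm: "snd \<in> \<xi> \<rightarrow>\<^sub>M (borel :: 'a measure)"
    using measurable_cong_sets[OF sx refl] measurable_snd[of "borel::'a measure" "borel::'a measure"] by blast
  have e1: "(\<integral>w. h w \<partial>K y) = (\<integral>p. h (fst p) \<partial>\<xi>)"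
    using integral_distr[OF fm hb] d1 by simp
  have e2: "(\<integral>w. h w \<partial>K z) = (\<integral>p. h (snd p) \<partial>\<xi>)"
    using integral_distr[OF sm hb] d2 by simp
  have i1: "integrable \<xi> (\<lambda>p. h (fst p))"
    using integrable_distr_eq[OF fm hb] d1 lip_integrable[OF h, of y] by simp
  have i2: "integrable \<xi> (\<lambda>p. h (snd p))"
    using integrable_distr_eq[OF sm hb] d2 lip_integrable[OF h, of z] by simp
  have "\<bar>(\<integral>w. h w \<partial>K y) - (\<integral>w. h w \<partial>K z)\<bar> = \<bar>\<integral>p. h (fst p) - h (snd p) \<partial>\<xi>\<bar>"
    using e1 e2 i1 i2 by simp
  also have "\<dots> \<le> (\<integral>p. \<bar>h (fst p) - h (snd p)\<bar> \<partial>\<xi>)" by (rule integral_abs_bound)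
  finally have "ennreal \<bar>(\<integral>w. h w \<partial>K y) - (\<integral>w. h w \<partial>K z)\<bar> \<le> ennreal (\<integral>p. \<bar>h (fst p) - h (snd p)\<bar> \<partial>\<xi>)"
    by (rule ennreal_leI)
  also have "\<dots> = (\<integral>\<^sup>+p. ennreal \<bar>h (fst p) - h (snd p)\<bar> \<partial>\<xi>)"
    by (rule nn_integral_eq_integral[symmetric]) (use i1 i2 in auto)
  also have "\<dots> \<le> (\<integral>\<^sup>+p. ennreal C * ennreal (dist (fst p) (snd p)) \<partial>\<xi>)"
  proof (rule nn_integral_mono)
    fix p
    have "\<bar>h (fst p) - h (snd p)\<bar> \<le> C * dist (fst p) (snd p)"
      using lipschitz_onD[OF h] by (auto simp: dist_real_def)
    then show "ennreal \<bar>h (fst p) - h (snd p)\<bar> \<le> ennreal C * ennreal (dist (fst p) (snd p))"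
      by (simp add: ennreal_mult'[symmetric] C0 ennreal_leI)
  qed
  also have "\<dots> = ennreal C * (\<integral>\<^sup>+ p. ennreal (dist (fst p) (snd p)) \<partial>\<xi>)"
    by (rule nn_integral_cmult) (use fm sm in measurable)
  finally show ?thesis .
qed

lemma P_lip:
  fixes h :: "'a \<Rightarrow> real"
  assumes h: "C-lipschitz_on UNIV h"
  shows "(C * max 0 (1 - \<kappa>))-lipschitz_on UNIV (\<lambda>y. \<integral>w. h w \<partial>K y)"
proof (rule lipschitz_onI)
  have C0: "0 \<le> C" using lipschitz_on_nonneg[OF h] .
  then show "0 \<le> C * max 0 (1 - \<kappa>)" by simp
  fix y z :: 'a
  define \<Delta> where "\<Delta> = \<bar>(\<integral>w. h w \<partial>K y) - (\<integral>w. h w \<partial>K z)\<bar>"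
  have W: "W1 (K y) (K z) \<le> ennreal ((1 - \<kappa>) * dist y z)" and q0: "0 \<le> (1 - \<kappa>) * dist y z"
    using W1_le[of y z] by auto
  have "\<Delta> \<le> C * ((1 - \<kappa>) * dist y z)"
  proof (cases "C = 0")
    case True
    have "ennreal \<Delta> \<le> 0"
    proof -
      have "\<exists>\<xi>. \<xi> \<in> couplings (K y) (K z)"
      proof (rule ccontr)
        assume "\<not> ?thesis"
        then have "W1 (K y) (K z) = \<top>" by (simp add: W1_def)
        with W show False by (simp add: top_unique)
      qed
      then obtain \<xi> where "\<xi> \<in> couplings (K y) (K z)" by blast
      from coupling_bound[OF h this] True show ?thesis by (simp add: \<Delta>_def)
    qed
    then show ?thesis using True q0 by (simp add: \<Delta>_def)
  next
    case False
    with C0 have Cp: "C > 0" by simp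
    have "ennreal (\<Delta> / C) \<le> W1 (K y) (K z)"
      unfolding W1_def
    proof (rule INF_greatest)
      fix \<xi> assume "\<xi> \<in> couplings (K y) (K z)"
      from coupling_bound[OF h this]
      have "ennreal C * ennreal (\<Delta> / C) \<le> ennreal C * (\<integral>\<^sup>+ p. ennreal (dist (fst p) (snd p)) \<partial>\<xi>)"
        using Cp by (simp add: \<Delta>_def ennreal_mult'[symmetric])
      then show "ennreal (\<Delta> / C) \<le> (\<integral>\<^sup>+ p. ennreal (dist (fst p) (snd p)) \<partial>\<xi>)"
        using Cp by (simp add: ennreal_mult_le_mult_iff)
    qed
    also note W
    finally have "\<Delta> / C \<le> (1 - \<kappa>) * dist y z" using q0 by (simp add: ennreal_le_iff)
    then show ?thesis using Cp by (simp add: field_simps)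
  qed
  also have "\<dots> \<le> C * max 0 (1 - \<kappa>) * dist y z"
  proof -
    have "(1 - \<kappa>) * dist y z \<le> max 0 (1 - \<kappa>) * dist y z" by (intro mult_right_mono) auto
    from mult_left_mono[OF this C0] show ?thesis by (simp add: mult.assoc)
  qed
  finally show "dist (\<integral>w. h w \<partial>K y) (\<integral>w. h w \<partial>K z) \<le> C * max 0 (1 - \<kappa>) * dist y z"
    by (simp add: \<Delta>_def dist_real_def)
qed

end


lemma sq_sum_le: "((a::real) + b)\<^sup>2 \<le> 2 * a\<^sup>2 + 2 * b\<^sup>2"
proof -
  have "0 \<le> (a - b) * (a - b)" by simp
  then show ?thesis by (simp add: power2_eq_square algebra_simps)
qed

context
  fixes K :: "'a::polish_space \<Rightarrow> 'a measure" and \<kappa> :: real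
  assumes K_meas: "K \<in> borel \<rightarrow>\<^sub>M prob_algebra borel"
    and first_moment: "\<And>y. (\<integral>\<^sup>+ z. ennreal (dist y z) \<partial>K y) < \<top>"
    and contraction: "\<And>y z. enn2ereal (W1 (K y) (K z)) \<le> ereal ((1 - \<kappa>) * dist y z)"
begin

lemma Kp: "prob_space (K y)" using K_prob[OF K_meas first_moment contraction] .
lemma Km: "h \<in> borel_measurable borel \<Longrightarrow> h \<in> borel_measurable (K y)"
  using K_meas_sub[OF K_meas first_moment contraction] .
lemma Ksp: "space (K y) = UNIV" using K_space[OF K_meas first_moment contraction] .
lemma Kli: "C-lipschitz_on UNIV (h::'a\<Rightarrow>real) \<Longrightarrow> integrable (K y) h"
  using lip_integrable[OF K_meas first_moment contraction] .

lemma second_moment: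
  assumes "dsq K y < \<top>"
  shows "\<exists>z0. (\<integral>\<^sup>+ z. ennreal ((dist z0 z)\<^sup>2) \<partial>K y) < \<top>"
proof (rule ccontr)
  assume "\<not> ?thesis"
  then have "\<And>z0. (\<integral>\<^sup>+ z. ennreal ((dist z0 z)\<^sup>2) \<partial>K y) = \<top>" using less_top by blast
  then have "dsq K y = (\<integral>\<^sup>+ z0. \<top> \<partial>K y)" by (simp add: dsq_def)
  also have "\<dots> = \<top>" using prob_space.emeasure_space_1[OF Kp] by simp
  finally show False using assms by simp
qed

lemma sq_integrable:
  fixes h :: "'a \<Rightarrow> real"
  assumes h: "C-lipschitz_on UNIV h" and d: "dsq K y < \<top>"
  shows "integrable (K y) (\<lambda>z. (h z)\<^sup>2)"
proof -
  obtain z0 where z0: "(\<integral>\<^sup>+ z. ennreal ((dist z0 z)\<^sup>2) \<partial>K y) < \<top>"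
    using second_moment[OF d] by blast
  interpret prob_space "K y" by (rule Kp)
  have di: "integrable (K y) (\<lambda>z. (dist z0 z)\<^sup>2)"
    by (rule integrableI_nonneg) (auto intro!: Km simp: z0)
  have "integrable (K y) (\<lambda>z. 2 * (h z0)\<^sup>2 + 2 * C\<^sup>2 * (dist z0 z)\<^sup>2)"
    using di by auto
  then show ?thesis
  proof (rule Bochner_Integration.integrable_bound)
    show "(\<lambda>z. (h z)\<^sup>2) \<in> borel_measurable (K y)"
      using lip_borel[OF h] by (intro Km) measurable
    show "AE z in K y. norm ((h z)\<^sup>2) \<le> norm (2 * (h z0)\<^sup>2 + 2 * C\<^sup>2 * (dist z0 z)\<^sup>2)"
    proof (rule AE_I2)
      fix z
      have "dist (h z0) (h z) \<le> C * dist z0 z" using lipschitz_onD[OF h] by auto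
      then have a: "\<bar>h z\<bar> \<le> \<bar>h z0\<bar> + C * dist z0 z" by (auto simp: dist_real_def)
      have C0: "0 \<le> C" using lipschitz_on_nonneg[OF h] .
      have "(h z)\<^sup>2 \<le> (\<bar>h z0\<bar> + C * dist z0 z)\<^sup>2"
        using a by (metis abs_ge_zero power2_abs power_mono)
      also have "\<dots> \<le> 2 * \<bar>h z0\<bar>\<^sup>2 + 2 * (C * dist z0 z)\<^sup>2" by (rule sq_sum_le)
      also have "\<dots> = 2 * (h z0)\<^sup>2 + 2 * C\<^sup>2 * (dist z0 z)\<^sup>2" by (simp add: power_mult_distrib)
      finally show "norm ((h z)\<^sup>2) \<le> norm (2 * (h z0)\<^sup>2 + 2 * C\<^sup>2 * (dist z0 z)\<^sup>2)" by simp
    qed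
  qed
qed

end


context
  fixes K :: "'a::polish_space \<Rightarrow> 'a measure" and \<kappa> :: real
  assumes K_meas: "K \<in> borel \<rightarrow>\<^sub>M prob_algebra borel"
    and first_moment: "\<And>y. (\<integral>\<^sup>+ z. ennreal (dist y z) \<partial>K y) < \<top>"
    and contraction: "\<And>y z. enn2ereal (W1 (K y) (K z)) \<le> ereal ((1 - \<kappa>) * dist y z)"
begin

lemmas Kp' = Kp[OF K_meas first_moment contraction]
lemmas Km' = Km[OF K_meas first_moment contraction]
lemmas Kli' = Kli[OF K_meas first_moment contraction]
lemmas sqi' = sq_integrable[OF K_meas first_moment contraction]

lemma shift_int:
  fixes h :: "'a \<Rightarrow> real"
  assumes h: "C-lipschitz_on UNIV h" and d: "dsq K y < \<top>"
  shows "integrable (K y) (\<lambda>z. (t + h z)\<^sup>2)"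
    and "(\<integral>z. (t + h z)\<^sup>2 \<partial>K y) = t\<^sup>2 + 2 * t * (\<integral>z. h z \<partial>K y) + (\<integral>z. (h z)\<^sup>2 \<partial>K y)"
proof -
  interpret prob_space "K y" by (rule Kp')
  have i1: "integrable (K y) h" by (rule Kli'[OF h])
  have i2: "integrable (K y) (\<lambda>z. (h z)\<^sup>2)" by (rule sqi'[OF h d])
  have eq: "(\<lambda>z. (t + h z)\<^sup>2) = (\<lambda>z. t\<^sup>2 + (2 * t) * h z + (h z)\<^sup>2)"
    by (auto simp: power2_eq_square algebra_simps)
  show "integrable (K y) (\<lambda>z. (t + h z)\<^sup>2)" unfolding eq using i1 i2 by auto
  show "(\<integral>z. (t + h z)\<^sup>2 \<partial>K y) = t\<^sup>2 + 2 * t * (\<integral>z. h z \<partial>K y) + (\<integral>z. (h z)\<^sup>2 \<partial>K y)"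
    unfolding eq using i1 i2 by (simp add: Bochner_Integration.integral_add prob_space)
qed

lemma var_nonneg:
  fixes h :: "'a \<Rightarrow> real"
  assumes h: "C-lipschitz_on UNIV h" and d: "dsq K y < \<top>"
  shows "(\<integral>z. h z \<partial>K y)\<^sup>2 \<le> (\<integral>z. (h z)\<^sup>2 \<partial>K y)"
proof -
  define m where "m = (\<integral>z. h z \<partial>K y)"
  define E2 where "E2 = (\<integral>z. (h z)\<^sup>2 \<partial>K y)"
  have "0 \<le> (\<integral>z. (- m + h z)\<^sup>2 \<partial>K y)" by simp
  also have "\<dots> = (- m)\<^sup>2 + 2 * (- m) * m + E2"
    unfolding m_def E2_def by (rule shift_int(2)[OF h d])
  also have "\<dots> = E2 - m\<^sup>2" by (simp add: power2_eq_square)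
  finally show ?thesis by (simp add: m_def E2_def)
qed

lemma shift_nn:
  fixes h :: "'a \<Rightarrow> real"
  assumes h: "C-lipschitz_on UNIV h" and d: "dsq K y < \<top>"
  shows "(\<integral>\<^sup>+z. ennreal ((t + h z)\<^sup>2) \<partial>K y)
       = ennreal ((t + (\<integral>z. h z \<partial>K y))\<^sup>2 + ((\<integral>z. (h z)\<^sup>2 \<partial>K y) - (\<integral>z. h z \<partial>K y)\<^sup>2))"
proof -
  have "(\<integral>\<^sup>+z. ennreal ((t + h z)\<^sup>2) \<partial>K y) = ennreal (\<integral>z. (t + h z)\<^sup>2 \<partial>K y)"
    by (rule nn_integral_eq_integral[OF shift_int(1)[OF h d]]) auto
  also have "\<dots> = ennreal ((t + (\<integral>z. h z \<partial>K y))\<^sup>2 + ((\<integral>z. (h z)\<^sup>2 \<partial>K y) - (\<integral>z. h z \<partial>K y)\<^sup>2))"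
    by (subst shift_int(2)[OF h d]) (simp add: power2_eq_square algebra_simps)
  finally show ?thesis .
qed

lemma fsq_eq:
  fixes h :: "'a \<Rightarrow> real"
  assumes h: "C-lipschitz_on UNIV h" and d: "dsq K y < \<top>"
  shows "fsq K h y = ennreal (2 * ((\<integral>z. (h z)\<^sup>2 \<partial>K y) - (\<integral>z. h z \<partial>K y)\<^sup>2))"
proof -
  interpret prob_space "K y" by (rule Kp')
  define m where "m = (\<integral>z. h z \<partial>K y)"
  define E2 where "E2 = (\<integral>z. (h z)\<^sup>2 \<partial>K y)"
  have i1: "integrable (K y) h" by (rule Kli'[OF h])
  have i2: "integrable (K y) (\<lambda>z. (h z)\<^sup>2)" by (rule sqi'[OF h d])
  have inner: "(\<integral>\<^sup>+ z. ennreal ((h a - h z)\<^sup>2) \<partial>K y) = ennreal ((h a)\<^sup>2 - 2 * h a * m + E2)"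
    and g0: "0 \<le> (h a)\<^sup>2 - 2 * h a * m + E2" for a
  proof -
    have "(\<integral>\<^sup>+ z. ennreal ((h a - h z)\<^sup>2) \<partial>K y) = (\<integral>\<^sup>+ z. ennreal ((- h a + h z)\<^sup>2) \<partial>K y)"
      by (intro nn_integral_cong) (simp add: power2_commute)
    also have "\<dots> = ennreal ((- h a + m)\<^sup>2 + (E2 - m\<^sup>2))"
      unfolding m_def E2_def by (rule shift_nn[OF h d])
    also have "(- h a + m)\<^sup>2 + (E2 - m\<^sup>2) = (h a)\<^sup>2 - 2 * h a * m + E2"
      by (simp add: power2_eq_square algebra_simps)
    finally show "(\<integral>\<^sup>+ z. ennreal ((h a - h z)\<^sup>2) \<partial>K y) = ennreal ((h a)\<^sup>2 - 2 * h a * m + E2)" .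
    have "m\<^sup>2 \<le> E2" unfolding m_def E2_def by (rule var_nonneg[OF h d])
    have "0 \<le> (- h a + m)\<^sup>2 + (E2 - m\<^sup>2)" using \<open>m\<^sup>2 \<le> E2\<close> by simp
    then show "0 \<le> (h a)\<^sup>2 - 2 * h a * m + E2"
      by (simp add: power2_eq_square algebra_simps)
  qed
  have ig: "integrable (K y) (\<lambda>a. (h a)\<^sup>2 - 2 * h a * m + E2)"
    using i1 i2 by auto
  have "fsq K h y = (\<integral>\<^sup>+ a. ennreal ((h a)\<^sup>2 - 2 * h a * m + E2) \<partial>K y)"
    by (simp add: fsq_def inner)
  also have "\<dots> = ennreal (\<integral>a. (h a)\<^sup>2 - 2 * h a * m + E2 \<partial>K y)"
    by (rule nn_integral_eq_integral[OF ig]) (simp add: g0)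
  also have "(\<integral>a. (h a)\<^sup>2 - 2 * h a * m + E2 \<partial>K y) = E2 - 2 * m * m + E2"
    using i1 i2 by (simp add: Bochner_Integration.integral_add Bochner_Integration.integral_diff m_def E2_def prob_space)
  finally show ?thesis by (simp add: m_def E2_def power2_eq_square algebra_simps)
qed

end


lemma ediv1: "(F::ennreal) \<noteq> 0 \<Longrightarrow> F \<le> D \<Longrightarrow> D < \<top> \<Longrightarrow> ld \<le> D / F \<Longrightarrow> F \<le> D / ld"
  by (metis divide_less_ennreal ennreal_divide_eq_top_iff mult.commute
    not_less order_antisym top.extremum zero_order(2))

lemma ediv3: "(X / 2) / (ld::ennreal) = (X / ld) / 2"
  by (metis ennreal_divide_times ennreal_times_divide mult_1s(2))

lemma ehalf: "ennreal (2 * v) \<le> X \<Longrightarrow> 0 \<le> v \<Longrightarrow> ennreal v \<le> X / 2"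
proof -
  assume a: "ennreal (2 * v) \<le> X" and v: "0 \<le> v"
  have "ennreal v = (ennreal v * 2) / 2"
    by (rule ennreal_mult_divide_eq[symmetric]) auto
  also have "ennreal v * 2 = ennreal (2 * v)" using v by (simp add: ennreal_mult mult.commute)
  finally show ?thesis using a by (metis divide_right_mono_ennreal)
qed

context
  fixes K :: "'a::polish_space \<Rightarrow> 'a measure" and \<kappa> :: real
  assumes K_meas: "K \<in> borel \<rightarrow>\<^sub>M prob_algebra borel"
    and first_moment: "\<And>y. (\<integral>\<^sup>+ z. ennreal (dist y z) \<partial>K y) < \<top>"
    and contraction: "\<And>y z. enn2ereal (W1 (K y) (K z)) \<le> ereal ((1 - \<kappa>) * dist y z)"
begin

lemmas Kp'' = Kp[OF K_meas first_moment contraction]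
lemmas fsq_eq' = fsq_eq[OF K_meas first_moment contraction]
lemmas shift_nn' = shift_nn[OF K_meas first_moment contraction]
lemmas var_nonneg' = var_nonneg[OF K_meas first_moment contraction]

lemma fsq_le_dsq:
  fixes h :: "'a \<Rightarrow> real"
  assumes h: "1-lipschitz_on UNIV h"
  shows "fsq K h y \<le> dsq K y"
  unfolding fsq_def dsq_def
proof (intro nn_integral_mono)
  fix a b
  have "\<bar>h a - h b\<bar> \<le> dist a b" using lipschitz_onD[OF h, of a b] by (simp add: dist_real_def)
  then have "(h a - h b)\<^sup>2 \<le> (dist a b)\<^sup>2"
    by (metis abs_ge_zero power2_abs power_mono)
  then show "ennreal ((h a - h b)\<^sup>2) \<le> ennreal ((dist a b)\<^sup>2)" by (rule ennreal_leI)
qed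

lemma var_bound:
  fixes h :: "'a \<Rightarrow> real"
  assumes h: "C-lipschitz_on UNIV h" and d: "dsq K y < \<top>"
  shows "ennreal ((\<integral>z. (h z)\<^sup>2 \<partial>K y) - (\<integral>z. h z \<partial>K y)\<^sup>2)
     \<le> ennreal (C\<^sup>2) * (coarse_sigma2 K y / local_dim K y)"
proof -
  define V where "V = (\<integral>z. (h z)\<^sup>2 \<partial>K y) - (\<integral>z. h z \<partial>K y)\<^sup>2"
  have V0: "0 \<le> V" using var_nonneg'[OF h d] by (simp add: V_def)
  have C0: "0 \<le> C" using lipschitz_on_nonneg[OF h] .
  show ?thesis
  proof (cases "C = 0")
    case True
    have "fsq K h y = 0"
    proof -
      have "\<And>a b. h a = h b" using lipschitz_onD[OF h] True by fastforce
      then have z: "\<And>a b. (h a - h b)\<^sup>2 = 0" by simp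
      show ?thesis by (simp add: fsq_def z)
    qed
    then have "ennreal (2 * V) = 0" using fsq_eq'[OF h d] unfolding V_def by simp
    then have "V \<le> 0" by (simp add: ennreal_eq_0_iff)
    then show ?thesis using V0 by (simp add: V_def)
  next
    case False
    with C0 have Cp: "0 < C" by simp
    define h1 where "h1 = (\<lambda>z. h z / C)"
    have h1: "1-lipschitz_on UNIV h1"
    proof (rule lipschitz_onI)
      fix a b :: 'a
      have "dist (h a) (h b) \<le> C * dist a b" using lipschitz_onD[OF h] by auto
      then show "dist (h1 a) (h1 b) \<le> 1 * dist a b"
        using Cp by (simp add: h1_def dist_real_def diff_divide_distrib[symmetric] abs_div pos_divide_le_eq mult.commute)
    qed simp
    define V1 where "V1 = (\<integral>z. (h1 z)\<^sup>2 \<partial>K y) - (\<integral>z. h1 z \<partial>K y)\<^sup>2"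
    have V1eq: "V1 = V / C\<^sup>2"
      by (simp add: V1_def V_def h1_def power_divide diff_divide_distrib)
    have F: "fsq K h1 y = ennreal (2 * V1)" unfolding V1_def by (rule fsq_eq'[OF h1 d])
    have FD: "fsq K h1 y \<le> dsq K y" by (rule fsq_le_dsq[OF h1])
    have Fl: "fsq K h1 y \<le> dsq K y / local_dim K y"
    proof (cases "fsq K h1 y = 0")
      case True then show ?thesis by simp
    next
      case False
      have "local_dim K y \<le> (if fsq K h1 y = 0 then \<top> else dsq K y / fsq K h1 y)"
        unfolding local_dim_def by (rule INF_lower) (simp add: h1)
      with False have "local_dim K y \<le> dsq K y / fsq K h1 y" by simp
      from ediv1[OF False FD d this] show ?thesis .
    qed
    have "ennreal V1 \<le> (dsq K y / local_dim K y) / 2"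
      by (rule ehalf) (use F Fl V0 Cp in \<open>auto simp: V1eq\<close>)
    also have "\<dots> = coarse_sigma2 K y / local_dim K y"
      by (simp add: coarse_sigma2_def ediv3)
    finally have a: "ennreal V1 \<le> coarse_sigma2 K y / local_dim K y" .
    have "ennreal V = ennreal (C\<^sup>2) * ennreal V1"
      using Cp V0 by (simp add: V1eq ennreal_mult[symmetric])
    also have "\<dots> \<le> ennreal (C\<^sup>2) * (coarse_sigma2 K y / local_dim K y)"
      using a by (rule mult_left_mono) simp
    finally show ?thesis by (simp add: V_def)
  qed
qed

lemma step_bound:
  fixes h :: "'a \<Rightarrow> real"
  assumes h: "C-lipschitz_on UNIV h" and s: "coarse_sigma2 K y < \<top>"
  shows "(\<integral>\<^sup>+z. ennreal ((t + h z)\<^sup>2) \<partial>K y)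
      \<le> ennreal ((t + (\<integral>z. h z \<partial>K y))\<^sup>2) + ennreal (C\<^sup>2) * (coarse_sigma2 K y / local_dim K y)"
proof -
  have d: "dsq K y < \<top>"
    using s ennreal_divide_eq_top_iff[of "dsq K y" 2] by (auto simp: coarse_sigma2_def less_top)
  have V0: "0 \<le> (\<integral>z. (h z)\<^sup>2 \<partial>K y) - (\<integral>z. h z \<partial>K y)\<^sup>2" using var_nonneg'[OF h d] by simp
  have "(\<integral>\<^sup>+z. ennreal ((t + h z)\<^sup>2) \<partial>K y)
       = ennreal ((t + (\<integral>z. h z \<partial>K y))\<^sup>2) + ennreal ((\<integral>z. (h z)\<^sup>2 \<partial>K y) - (\<integral>z. h z \<partial>K y)\<^sup>2)"
    using shift_nn'[OF h d, of t] V0 by (simp add: ennreal_plus)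
  also have "\<dots> \<le> ennreal ((t + (\<integral>z. h z \<partial>K y))\<^sup>2) + ennreal (C\<^sup>2) * (coarse_sigma2 K y / local_dim K y)"
    by (rule add_left_mono[OF var_bound[OF h d]])
  finally show ?thesis .
qed

end


lemma sum_meas:
  fixes g :: "nat \<Rightarrow> 'a::metric_space \<Rightarrow> real"
  assumes "\<forall>k\<le>m. (c k)-lipschitz_on UNIV (g k)" and "n \<le> m"
  shows "(\<lambda>\<omega>. \<Sum>k\<le>n. g k (\<omega> k)) \<in> borel_measurable (PiM {0..m} (\<lambda>_. borel))"
proof (rule borel_measurable_sum)
  fix k assume "k \<in> {..n}"
  then have k: "k \<in> {0..m}" and l: "(c k)-lipschitz_on UNIV (g k)" using assms by auto
  show "(\<lambda>\<omega>. g k (\<omega> k)) \<in> borel_measurable (PiM {0..m} (\<lambda>_. borel))"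
    by (rule measurable_compose[OF measurable_component_singleton[OF k] lip_borel[OF l]])
qed

lemma upd_meas:
  "(\<lambda>y. (restrict \<omega> {0..n})(Suc n := y)) \<in> (M::'a::topological_space measure) \<rightarrow>\<^sub>M borel \<Longrightarrow> True" by simp

lemma upd_meas2:
  assumes "sets M = sets (borel::'a::topological_space measure)"
  shows "(\<lambda>y. (restrict \<omega> {0..n})(Suc n := y)) \<in> M \<rightarrow>\<^sub>M PiM {0..Suc n} (\<lambda>_. (borel::'a measure))"
  apply (rule measurable_PiM_single')
  subgoal for i
    by (cases "i = Suc n") (auto simp: measurable_cong_sets[OF assms refl])
  subgoal by (auto simp: PiE_def extensional_def restrict_def)
  done


lemma D_shift:
  fixes c :: "nat \<Rightarrow> real"
  assumes "1 \<le> j" "j \<le> n"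
  shows "(\<Sum>k\<in>{j..n}. q^(k-j) * (c(n := c n + q * c (Suc n))) k) = (\<Sum>k\<in>{j..Suc n}. q^(k-j) * c k)"
proof -
  have "(\<Sum>k\<in>{j..n}. q^(k-j) * (c(n := c n + q * c (Suc n))) k)
      = (\<Sum>k\<in>{j..n}. q^(k-j) * c k + (if k = n then q^(k-j) * (q * c (Suc n)) else 0))"
    by (intro sum.cong) (auto simp: algebra_simps)
  also have "\<dots> = (\<Sum>k\<in>{j..n}. q^(k-j) * c k) + q^(n-j) * (q * c (Suc n))"
    using assms by (simp add: sum.distrib)
  also have "q^(n-j) * (q * c (Suc n)) = q^(Suc n - j) * c (Suc n)"
    using assms by (simp add: Suc_diff_le)
  also have "(\<Sum>k\<in>{j..n}. q^(k-j) * c k) + q^(Suc n - j) * c (Suc n) = (\<Sum>k\<in>{j..Suc n}. q^(k-j) * c k)"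
    using assms by (simp add: sum.cl_ivl_Suc)
  finally show ?thesis .
qed

context
  fixes K :: "'a::polish_space \<Rightarrow> 'a measure" and \<kappa> :: real
  assumes K_meas: "K \<in> borel \<rightarrow>\<^sub>M prob_algebra borel"
    and first_moment: "\<And>y. (\<integral>\<^sup>+ z. ennreal (dist y z) \<partial>K y) < \<top>"
    and contraction: "\<And>y z. enn2ereal (W1 (K y) (K z)) \<le> ereal ((1 - \<kappa>) * dist y z)"
    and sigma_fin: "\<And>y. coarse_sigma2 K y < \<top>"
begin

lemma main:
  fixes g :: "nat \<Rightarrow> 'a \<Rightarrow> real" and c :: "nat \<Rightarrow> real"
  assumes "\<forall>k\<le>n. (c k)-lipschitz_on UNIV (g k)"
  shows "\<exists>a. (\<integral>\<^sup>+\<omega>. ennreal (((\<Sum>k\<le>n. g k (\<omega> k)) - a)\<^sup>2) \<partial>path K x n)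
      \<le> (SUP y. coarse_sigma2 K y / local_dim K y)
        * ennreal (\<Sum>j\<in>{1..n}. (\<Sum>k\<in>{j..n}. (max 0 (1 - \<kappa>))^(k-j) * c k)\<^sup>2)"
  using assms
proof (induction n arbitrary: g c)
  case 0
  have l0: "(c 0)-lipschitz_on UNIV (g 0)" using 0 by auto
  have sp: "(\<lambda>i\<in>{0}. x) \<in> space (PiM {0} (\<lambda>_. borel::'a measure))" by (simp add: space_PiM)
  have m: "(\<lambda>\<omega>. ennreal ((g 0 (\<omega> 0) - g 0 x)\<^sup>2)) \<in> borel_measurable (PiM {0} (\<lambda>_. borel::'a measure))"
    using lip_borel[OF l0] by measurable
  have "(\<integral>\<^sup>+\<omega>. ennreal (((\<Sum>k\<le>0. g k (\<omega> k)) - g 0 x)\<^sup>2) \<partial>path K x 0) = 0"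
    using nn_integral_return[OF sp m] by simp
  then show ?case by (intro exI[of _ "g 0 x"]) simp
next
  case (Suc n)
  define q where "q = max 0 (1 - \<kappa>)"
  define S where "S = (SUP y. coarse_sigma2 K y / local_dim K y)"
  define Ph where "Ph = (\<lambda>z. \<integral>w. g (Suc n) w \<partial>K z)"
  define g' where "g' = g(n := (\<lambda>z. g n z + Ph z))"
  define c' where "c' = c(n := c n + q * c (Suc n))"
  have lS: "(c (Suc n))-lipschitz_on UNIV (g (Suc n))" using Suc.prems by auto
  have lP: "(c (Suc n) * q)-lipschitz_on UNIV Ph"
    unfolding Ph_def q_def by (rule P_lip[OF K_meas first_moment contraction lS])
  have l': "\<forall>k\<le>n. (c' k)-lipschitz_on UNIV (g' k)"
  proof (intro allI impI)
    fix k assume "k \<le> n"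
    show "(c' k)-lipschitz_on UNIV (g' k)"
    proof (cases "k = n")
      case True
      have "(c n + c (Suc n) * q)-lipschitz_on UNIV (\<lambda>z. g n z + Ph z)"
        by (rule lipschitz_on_add) (use Suc.prems lP in auto)
      then show ?thesis using True by (simp add: g'_def c'_def mult.commute)
    next
      case False
      then show ?thesis using Suc.prems \<open>k \<le> n\<close> by (simp add: g'_def c'_def)
    qed
  qed
  from Suc.IH[OF l'] obtain a where a:
    "(\<integral>\<^sup>+\<omega>. ennreal (((\<Sum>k\<le>n. g' k (\<omega> k)) - a)\<^sup>2) \<partial>path K x n)
      \<le> S * ennreal (\<Sum>j\<in>{1..n}. (\<Sum>k\<in>{j..n}. q^(k-j) * c' k)\<^sup>2)"
    unfolding q_def S_def by blast
  define N where "N = (\<lambda>\<omega>. distr (K (\<omega> n)) (PiM {0..Suc n} (\<lambda>_. borel)) (\<lambda>y. (restrict \<omega> {0..n})(Suc n := y)))"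
  have ps: "path K x n \<in> space (prob_algebra (PiM {0..n} (\<lambda>_. borel)))" by (rule path_space[OF K_meas])
  then have sets_p: "sets (path K x n) = sets (PiM {0..n} (\<lambda>_. borel))" and pp: "prob_space (path K x n)"
    by (auto simp: space_prob_algebra)
  have Nm: "N \<in> path K x n \<rightarrow>\<^sub>M subprob_algebra (PiM {0..Suc n} (\<lambda>_. borel))"
    using measurable_prob_algebraD[OF kernel_meas[OF K_meas, of n]] measurable_cong_sets[OF sets_p refl]
    unfolding N_def by blast
  have Fm: "(\<lambda>\<omega>. ennreal (((\<Sum>k\<le>Suc n. g k (\<omega> k)) - a)\<^sup>2)) \<in> borel_measurable (PiM {0..Suc n} (\<lambda>_. borel::'a measure))"
    using sum_meas[OF Suc.prems order.refl] by measurable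
  have G'm: "(\<lambda>\<omega>. ennreal (((\<Sum>k\<le>n. g' k (\<omega> k)) - a)\<^sup>2)) \<in> borel_measurable (path K x n)"
  proof -
    have "(\<lambda>\<omega>. ennreal (((\<Sum>k\<le>n. g' k (\<omega> k)) - a)\<^sup>2)) \<in> borel_measurable (PiM {0..n} (\<lambda>_. borel::'a measure))"
      using sum_meas[OF l' order.refl] by measurable
    then show ?thesis using measurable_cong_sets[OF sets_p refl] by blast
  qed
  have pathS: "path K x (Suc n) = path K x n \<bind> N" unfolding N_def by (rule path.simps(2))
  have "(\<integral>\<^sup>+\<omega>. ennreal (((\<Sum>k\<le>Suc n. g k (\<omega> k)) - a)\<^sup>2) \<partial>path K x (Suc n))
      = (\<integral>\<^sup>+\<omega>. \<integral>\<^sup>+\<omega>'. ennreal (((\<Sum>k\<le>Suc n. g k (\<omega>' k)) - a)\<^sup>2) \<partial>N \<omega> \<partial>path K x n)"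
    unfolding pathS by (rule nn_integral_bind[OF Fm Nm])
  also have "\<dots> = (\<integral>\<^sup>+\<omega>. \<integral>\<^sup>+y. ennreal ((((\<Sum>k\<le>n. g k (\<omega> k)) - a) + g (Suc n) y)\<^sup>2) \<partial>K (\<omega> n) \<partial>path K x n)"
  proof (rule nn_integral_cong)
    fix \<omega> :: "nat \<Rightarrow> 'a"
    have "(\<integral>\<^sup>+\<omega>'. ennreal (((\<Sum>k\<le>Suc n. g k (\<omega>' k)) - a)\<^sup>2) \<partial>N \<omega>)
        = (\<integral>\<^sup>+y. ennreal (((\<Sum>k\<le>Suc n. g k (((restrict \<omega> {0..n})(Suc n := y)) k)) - a)\<^sup>2) \<partial>K (\<omega> n))"
      unfolding N_def
      by (rule nn_integral_distr[OF upd_meas2[OF K_sets[OF K_meas first_moment contraction]]]) (simp only: measurable_distr_eq1 Fm)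
    also have "\<dots> = (\<integral>\<^sup>+y. ennreal ((((\<Sum>k\<le>n. g k (\<omega> k)) - a) + g (Suc n) y)\<^sup>2) \<partial>K (\<omega> n))"
    proof (rule nn_integral_cong)
      fix y
      have "(\<Sum>k\<le>n. g k (((restrict \<omega> {0..n})(Suc n := y)) k)) = (\<Sum>k\<le>n. g k (\<omega> k))"
        by (intro sum.cong) auto
      then show "ennreal (((\<Sum>k\<le>Suc n. g k (((restrict \<omega> {0..n})(Suc n := y)) k)) - a)\<^sup>2)
          = ennreal ((((\<Sum>k\<le>n. g k (\<omega> k)) - a) + g (Suc n) y)\<^sup>2)"
        by (simp add: algebra_simps)
    qed
    finally show "(\<integral>\<^sup>+\<omega>'. ennreal (((\<Sum>k\<le>Suc n. g k (\<omega>' k)) - a)\<^sup>2) \<partial>N \<omega>)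
        = (\<integral>\<^sup>+y. ennreal ((((\<Sum>k\<le>n. g k (\<omega> k)) - a) + g (Suc n) y)\<^sup>2) \<partial>K (\<omega> n))" .
  qed
  also have "\<dots> \<le> (\<integral>\<^sup>+\<omega>. ennreal (((\<Sum>k\<le>n. g' k (\<omega> k)) - a)\<^sup>2) + ennreal ((c (Suc n))\<^sup>2) * S \<partial>path K x n)"
  proof (rule nn_integral_mono)
    fix \<omega> :: "nat \<Rightarrow> 'a"
    have sum': "(\<Sum>k\<le>n. g' k (\<omega> k)) = (\<Sum>k\<le>n. g k (\<omega> k)) + Ph (\<omega> n)"
    proof -
      have "(\<Sum>k\<le>n. g' k (\<omega> k)) = (\<Sum>k\<le>n. g k (\<omega> k) + (if k = n then Ph (\<omega> n) else 0))"
        by (intro sum.cong) (auto simp: g'_def)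
      then show ?thesis by (simp add: sum.distrib)
    qed
    have "(\<integral>\<^sup>+y. ennreal ((((\<Sum>k\<le>n. g k (\<omega> k)) - a) + g (Suc n) y)\<^sup>2) \<partial>K (\<omega> n))
        \<le> ennreal ((((\<Sum>k\<le>n. g k (\<omega> k)) - a) + Ph (\<omega> n))\<^sup>2)
          + ennreal ((c (Suc n))\<^sup>2) * (coarse_sigma2 K (\<omega> n) / local_dim K (\<omega> n))"
      unfolding Ph_def by (rule step_bound[OF K_meas first_moment contraction lS sigma_fin])
    also have "\<dots> \<le> ennreal ((((\<Sum>k\<le>n. g k (\<omega> k)) - a) + Ph (\<omega> n))\<^sup>2) + ennreal ((c (Suc n))\<^sup>2) * S"
      unfolding S_def by (intro add_left_mono mult_left_mono SUP_upper) auto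
    also have "((\<Sum>k\<le>n. g k (\<omega> k)) - a) + Ph (\<omega> n) = (\<Sum>k\<le>n. g' k (\<omega> k)) - a"
      by (simp add: sum')
    finally show "(\<integral>\<^sup>+y. ennreal ((((\<Sum>k\<le>n. g k (\<omega> k)) - a) + g (Suc n) y)\<^sup>2) \<partial>K (\<omega> n))
        \<le> ennreal (((\<Sum>k\<le>n. g' k (\<omega> k)) - a)\<^sup>2) + ennreal ((c (Suc n))\<^sup>2) * S" .
  qed
  also have "\<dots> = (\<integral>\<^sup>+\<omega>. ennreal (((\<Sum>k\<le>n. g' k (\<omega> k)) - a)\<^sup>2) \<partial>path K x n) + ennreal ((c (Suc n))\<^sup>2) * S"
    using prob_space.emeasure_space_1[OF pp] by (simp add: nn_integral_add[OF G'm])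
  also have "\<dots> \<le> S * ennreal (\<Sum>j\<in>{1..n}. (\<Sum>k\<in>{j..n}. q^(k-j) * c' k)\<^sup>2) + ennreal ((c (Suc n))\<^sup>2) * S"
    by (rule add_right_mono[OF a])
  also have "(\<Sum>j\<in>{1..n}. (\<Sum>k\<in>{j..n}. q^(k-j) * c' k)\<^sup>2) = (\<Sum>j\<in>{1..n}. (\<Sum>k\<in>{j..Suc n}. q^(k-j) * c k)\<^sup>2)"
  proof (intro sum.cong refl)
    fix j assume j: "j \<in> {1..n}"
    have "(\<Sum>k\<in>{j..n}. q^(k-j) * c' k) = (\<Sum>k\<in>{j..Suc n}. q^(k-j) * c k)"
      unfolding c'_def by (rule D_shift) (use j in auto)
    then show "(\<Sum>k\<in>{j..n}. q^(k-j) * c' k)\<^sup>2 = (\<Sum>k\<in>{j..Suc n}. q^(k-j) * c k)\<^sup>2"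
      by (simp only:)
  qed
  also have "S * ennreal (\<Sum>j\<in>{1..n}. (\<Sum>k\<in>{j..Suc n}. q^(k-j) * c k)\<^sup>2) + ennreal ((c (Suc n))\<^sup>2) * S
      = S * ennreal (\<Sum>j\<in>{1..Suc n}. (\<Sum>k\<in>{j..Suc n}. q^(k-j) * c k)\<^sup>2)"
  proof -
    have "(\<Sum>j\<in>{1..Suc n}. (\<Sum>k\<in>{j..Suc n}. q^(k-j) * c k)\<^sup>2)
        = (\<Sum>j\<in>{1..n}. (\<Sum>k\<in>{j..Suc n}. q^(k-j) * c k)\<^sup>2) + (c (Suc n))\<^sup>2"
      by (simp add: sum.cl_ivl_Suc)
    then show ?thesis
      by (simp add: ennreal_plus sum_nonneg distrib_left mult.commute)
  qed
  finally show ?case unfolding q_def S_def by blast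
qed

end


lemma var_le:
  fixes G :: "'b \<Rightarrow> real"
  assumes M: "prob_space M" and Gm: "G \<in> borel_measurable M"
  shows "ennreal (var M G) \<le> (\<integral>\<^sup>+\<omega>. ennreal ((G \<omega> - a)\<^sup>2) \<partial>M)"
proof (cases "(\<integral>\<^sup>+\<omega>. ennreal ((G \<omega> - a)\<^sup>2) \<partial>M) = \<top>")
  case True then show ?thesis by simp
next
  case False
  interpret prob_space M by (rule M)
  have i2: "integrable M (\<lambda>\<omega>. (G \<omega> - a)\<^sup>2)"
    by (rule integrableI_nonneg) (use False Gm in \<open>auto simp: less_top\<close>)
  have i1: "integrable M (\<lambda>\<omega>. G \<omega> - a)"
    by (rule square_integrable_imp_integrable) (use Gm i2 in auto)
  have "integrable M (\<lambda>\<omega>. (G \<omega> - a) + a)" by (rule Bochner_Integration.integrable_add[OF i1 integrable_const])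
  then have iG: "integrable M G" by simp
  define m where "m = (\<integral>\<omega>. G \<omega> \<partial>M)"
  have e1: "(\<integral>\<omega>. G \<omega> - a \<partial>M) = m - a"
    using iG by (simp add: m_def Bochner_Integration.integral_diff prob_space)
  have eq: "(\<lambda>\<omega>. (G \<omega> - m)\<^sup>2) = (\<lambda>\<omega>. (G \<omega> - a)\<^sup>2 + (- 2 * (m - a)) * (G \<omega> - a) + (m - a)\<^sup>2)"
    by (auto simp: power2_eq_square algebra_simps)
  have "var M G = (\<integral>\<omega>. (G \<omega> - m)\<^sup>2 \<partial>M)" by (simp add: var_def m_def)
  also have "\<dots> = (\<integral>\<omega>. (G \<omega> - a)\<^sup>2 \<partial>M) + (- 2 * (m - a)) * (m - a) + (m - a)\<^sup>2"
    unfolding eq using i1 i2 e1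
    by (simp add: Bochner_Integration.integral_add prob_space del: power2_eq_square)
  also have "\<dots> \<le> (\<integral>\<omega>. (G \<omega> - a)\<^sup>2 \<partial>M)"
  proof -
    have "(- 2 * (m - a)) * (m - a) + (m - a)\<^sup>2 = - (m - a)\<^sup>2" by (simp add: power2_eq_square algebra_simps)
    then show ?thesis using zero_le_power2[of "m - a"] by linarith
  qed
  finally have "ennreal (var M G) \<le> ennreal (\<integral>\<omega>. (G \<omega> - a)\<^sup>2 \<partial>M)" by (rule ennreal_leI)
  also have "\<dots> = (\<integral>\<^sup>+\<omega>. ennreal ((G \<omega> - a)\<^sup>2) \<partial>M)"
    by (rule nn_integral_eq_integral[symmetric]) (use i2 in auto)
  finally show ?thesis .
qed

lemma lip_norm_lip:
  fixes f :: "'a::metric_space \<Rightarrow> real"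
  assumes "C-lipschitz_on UNIV f"
  shows "\<bar>lip_norm f\<bar>-lipschitz_on UNIV f"
proof (rule lipschitz_onI)
  fix a b :: 'a
  show "dist (f a) (f b) \<le> \<bar>lip_norm f\<bar> * dist a b"
  proof (cases "a = b")
    case True then show ?thesis by simp
  next
    case False
    have bdd: "bdd_above ((\<lambda>p. dist (f (fst p)) (f (snd p)) / dist (fst p) (snd p)) ` {p. fst p \<noteq> snd p})"
    proof (rule bdd_aboveI2)
      fix p :: "'a \<times> 'a" assume "p \<in> {p. fst p \<noteq> snd p}"
      then have "0 < dist (fst p) (snd p)" by simp
      then show "dist (f (fst p)) (f (snd p)) / dist (fst p) (snd p) \<le> C"
        using lipschitz_onD[OF assms, of "fst p" "snd p"] by (simp add: divide_le_eq)
    qed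
    have "dist (f a) (f b) / dist a b \<le> lip_norm f"
      unfolding lip_norm_def using cSUP_upper[OF _ bdd, of "(a, b)"] False by simp
    then have "dist (f a) (f b) / dist a b \<le> \<bar>lip_norm f\<bar>" by simp
    then show ?thesis using False by (simp add: divide_le_eq)
  qed
qed simp


lemma geo_id:
  fixes q :: real
  shows "(1 - q) * (\<Sum>k\<in>{m..n}. q^(k-m)) = (if m \<le> n then 1 - q^(Suc n - m) else 0)"
proof (induction n)
  case 0 then show ?case by auto
next
  case (Suc n)
  show ?case
  proof (cases "m \<le> n")
    case True
    have "(1 - q) * (\<Sum>k\<in>{m..Suc n}. q^(k-m)) = (1 - q) * (\<Sum>k\<in>{m..n}. q^(k-m)) + (1 - q) * q^(Suc n - m)"
      using True by (simp add: sum.cl_ivl_Suc distrib_left)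
    also have "\<dots> = 1 - q^(Suc n - m) + (1 - q) * q^(Suc n - m)" using Suc True by simp
    also have "\<dots> = 1 - q^(Suc (Suc n) - m)"
      using True by (simp add: Suc_diff_le algebra_simps)
    finally show ?thesis using True by simp
  next
    case False
    then show ?thesis by (cases "m = Suc n") (auto simp: sum.cl_ivl_Suc)
  qed
qed

lemma geo1:
  fixes q :: real
  assumes "0 \<le> q" "q < 1"
  shows "(1 - q) * (\<Sum>k\<in>{m..n}. q^(k-m)) \<le> 1"
  using geo_id[of q m n] assms by (auto simp: zero_le_power)

lemma geo2:
  fixes p :: real
  assumes p: "0 \<le> p" "p < 1"
  shows "(1 - p) * (\<Sum>j\<in>{1..N}. p^(N + 1 - j)) \<le> p"
proof (induction N)
  case 0 then show ?case using p by simp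
next
  case (Suc N)
  define X where "X = (\<Sum>j\<in>{1..N}. p^(N + 1 - j))"
  have "(\<Sum>j\<in>{1..Suc N}. p^(Suc N + 1 - j)) = (\<Sum>j\<in>{1..N}. p^(Suc N + 1 - j)) + p"
    by (simp add: sum.cl_ivl_Suc)
  also have "(\<Sum>j\<in>{1..N}. p^(Suc N + 1 - j)) = p * X"
    unfolding X_def sum_distrib_left by (intro sum.cong refl) (auto simp: Suc_diff_le)
  finally have e: "(\<Sum>j\<in>{1..Suc N}. p^(Suc N + 1 - j)) = p * X + p" .
  have IH: "(1 - p) * X \<le> p" using Suc by (simp add: X_def)
  have "(1 - p) * (p * X + p) = p * ((1 - p) * X) + p * (1 - p)" by (simp add: algebra_simps)
  also have "\<dots> \<le> p * p + p * (1 - p)"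
    using mult_left_mono[OF IH p(1)] by simp
  also have "\<dots> = p" by (simp add: algebra_simps)
  finally show ?case using e by simp
qed

lemma Dj_bound:
  fixes \<kappa> L :: real and T T0 j :: nat
  assumes k: "0 < \<kappa>" "\<kappa> \<le> 1" and T: "1 \<le> T" and L: "0 \<le> L"
  shows "0 \<le> (\<Sum>k\<in>{j..T0+T}. (1 - \<kappa>)^(k-j) * (if k \<in> {T0+1..T0+T} then L / T else 0))
     \<and> (\<Sum>k\<in>{j..T0+T}. (1 - \<kappa>)^(k-j) * (if k \<in> {T0+1..T0+T} then L / T else 0))
       \<le> (L / (T * \<kappa>)) * (1 - \<kappa>)^(T0 + 1 - j)"
proof -
  define q where "q = 1 - \<kappa>"
  have q: "0 \<le> q" "q < 1" using k by (auto simp: q_def)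
  define m where "m = max j (T0 + 1)"
  have "(\<Sum>k\<in>{j..T0+T}. q^(k-j) * (if k \<in> {T0+1..T0+T} then L / T else 0))
      = (\<Sum>k\<in>{j..T0+T}. if k \<in> {T0+1..T0+T} then q^(k-j) * (L / T) else 0)"
    by (intro sum.cong) auto
  also have "\<dots> = (\<Sum>k\<in>{j..T0+T} \<inter> {T0+1..T0+T}. q^(k-j) * (L / T))"
    by (rule sum.inter_restrict[symmetric]) simp
  also have "{j..T0+T} \<inter> {T0+1..T0+T} = {m..T0+T}" by (auto simp: m_def)
  also have "(\<Sum>k\<in>{m..T0+T}. q^(k-j) * (L / T)) = (\<Sum>k\<in>{m..T0+T}. q^(m-j) * (L / T) * q^(k-m))"
  proof (intro sum.cong refl)
    fix k assume "k \<in> {m..T0+T}"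
    then have "k - j = (m - j) + (k - m)" using m_def by auto
    then show "q^(k-j) * (L / T) = q^(m-j) * (L / T) * q^(k-m)" by (simp add: power_add)
  qed
  also have "\<dots> = q^(m-j) * (L / T) * (\<Sum>k\<in>{m..T0+T}. q^(k-m))" by (simp add: sum_distrib_left)
  finally have eq: "(\<Sum>k\<in>{j..T0+T}. q^(k-j) * (if k \<in> {T0+1..T0+T} then L / T else 0))
      = q^(m-j) * (L / T) * (\<Sum>k\<in>{m..T0+T}. q^(k-m))" .
  have s0: "0 \<le> (\<Sum>k\<in>{m..T0+T}. q^(k-m))" using q by (simp add: sum_nonneg)
  have s1: "(\<Sum>k\<in>{m..T0+T}. q^(k-m)) \<le> 1 / \<kappa>"
    using geo1[OF q, of m "T0+T"] k by (simp add: q_def field_simps)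
  have a0: "0 \<le> q^(m-j) * (L / T)" using q L by simp
  have mj: "m - j = T0 + 1 - j" by (simp add: m_def)
  note eq
  also have "q^(m-j) * (L / T) * (\<Sum>k\<in>{m..T0+T}. q^(k-m)) \<le> q^(m-j) * (L / T) * (1 / \<kappa>)"
    by (rule mult_left_mono[OF s1 a0])
  also have "\<dots> = (L / (T * \<kappa>)) * q^(T0 + 1 - j)" by (simp add: mj field_simps)
  finally have up: "(\<Sum>k\<in>{j..T0+T}. q^(k-j) * (if k \<in> {T0+1..T0+T} then L / T else 0)) \<le> (L / (T * \<kappa>)) * q^(T0 + 1 - j)" .
  have "0 \<le> q^(m-j) * (L / T) * (\<Sum>k\<in>{m..T0+T}. q^(k-m))" by (rule mult_nonneg_nonneg[OF a0 s0])
  then have lo: "0 \<le> (\<Sum>k\<in>{j..T0+T}. q^(k-j) * (if k \<in> {T0+1..T0+T} then L / T else 0))"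
    by (simp only: eq)
  show ?thesis using lo up unfolding q_def by (rule conjI)
qed

lemma final_alg:
  fixes \<kappa> L :: real and T T0 :: nat
  assumes k: "0 < \<kappa>" "\<kappa> \<le> 1" and T: "1 \<le> T" and L: "0 \<le> L"
  shows "(\<Sum>j\<in>{1..T0+T}. (\<Sum>k\<in>{j..T0+T}. (max 0 (1 - \<kappa>))^(k-j) * (if k \<in> {T0+1..T0+T} then L / T else 0))\<^sup>2)
     \<le> L\<^sup>2 / (\<kappa> * real T) * (if T0 = 0 then 1 else 1 + 1 / (\<kappa> * real T)) / \<kappa>"
proof -
  define q where "q = 1 - \<kappa>"
  have q: "0 \<le> q" "q < 1" using k by (auto simp: q_def)
  have mq: "max 0 (1 - \<kappa>) = q" using k by (simp add: q_def)
  define A where "A = L / (T * \<kappa>)"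
  define D where "D = (\<lambda>j. (\<Sum>k\<in>{j..T0+T}. q^(k-j) * (if k \<in> {T0+1..T0+T} then L / T else 0)))"
  have Db: "(D j)\<^sup>2 \<le> A\<^sup>2 * (q\<^sup>2)^(T0 + 1 - j)" for j
  proof -
    have "0 \<le> D j" "D j \<le> A * q^(T0 + 1 - j)"
      using Dj_bound[OF k T L, of j T0] by (simp_all add: D_def A_def q_def)
    then have "(D j)\<^sup>2 \<le> (A * q^(T0 + 1 - j))\<^sup>2" by (simp add: power_mono)
    moreover have "(A * q^(T0 + 1 - j))\<^sup>2 = A\<^sup>2 * (q\<^sup>2)^(T0 + 1 - j)"
      by (simp only: power_mult_distrib) (metis power_mult mult.commute)
    ultimately show ?thesis by simp
  qed
  have split: "(\<Sum>j\<in>{1..T0+T}. (D j)\<^sup>2) = (\<Sum>j\<in>{1..T0}. (D j)\<^sup>2) + (\<Sum>j\<in>{T0+1..T0+T}. (D j)\<^sup>2)"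
    by (rule sum.ub_add_nat) simp
  have p1: "(\<Sum>j\<in>{T0+1..T0+T}. (D j)\<^sup>2) \<le> real T * A\<^sup>2"
  proof -
    have "(\<Sum>j\<in>{T0+1..T0+T}. (D j)\<^sup>2) \<le> (\<Sum>j\<in>{T0+1..T0+T}. A\<^sup>2)"
    proof (rule sum_mono)
      fix j assume "j \<in> {T0+1..T0+T}"
      then have "T0 + 1 - j = 0" by auto
      then show "(D j)\<^sup>2 \<le> A\<^sup>2" using Db[of j] by simp
    qed
    then show ?thesis by simp
  qed
  define X where "X = (\<Sum>j\<in>{1..T0}. (q\<^sup>2)^(T0 + 1 - j))"
  have p2: "(\<Sum>j\<in>{1..T0}. (D j)\<^sup>2) \<le> A\<^sup>2 * X"
    unfolding X_def sum_distrib_left by (rule sum_mono) (rule Db)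
  have X0: "0 \<le> X" unfolding X_def by (simp add: sum_nonneg)
  have q2: "0 \<le> q\<^sup>2" "q\<^sup>2 < 1" using q by (auto simp: power_less_one_iff abs_square_less_1)
  have gX: "(1 - q\<^sup>2) * X \<le> q\<^sup>2" unfolding X_def by (rule geo2[OF q2])
  have X1: "\<kappa> * X \<le> 1"
  proof -
    have e: "1 - q\<^sup>2 = \<kappa> * (2 - \<kappa>)" by (simp add: q_def power2_eq_square algebra_simps)
    have "\<kappa> * X * (2 - \<kappa>) \<le> (1 - \<kappa>)\<^sup>2" using gX e by (simp add: q_def mult_ac)
    also have "\<dots> \<le> 2 - \<kappa>"
    proof -
      have kk: "\<kappa> * \<kappa> \<le> 1 * \<kappa>" using mult_right_mono[OF k(2), of \<kappa>] k by simp
      have "(1 - \<kappa>)\<^sup>2 = 1 - 2 * \<kappa> + \<kappa> * \<kappa>" by (simp add: power2_eq_square algebra_simps)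
      then show ?thesis using kk k by linarith
    qed
    finally have "\<kappa> * X * (2 - \<kappa>) \<le> 1 * (2 - \<kappa>)" by simp
    then show ?thesis using k by (simp add: mult_le_cancel_right)
  qed
  have X00: "T0 = 0 \<Longrightarrow> X = 0" by (simp add: X_def)
  have "(\<Sum>j\<in>{1..T0+T}. (D j)\<^sup>2) \<le> A\<^sup>2 * X + real T * A\<^sup>2" using split p1 p2 by simp
  also have "\<dots> \<le> L\<^sup>2 / (\<kappa> * real T) * (if T0 = 0 then 1 else 1 + 1 / (\<kappa> * real T)) / \<kappa>"
  proof (cases "T0 = 0")
    case True
    then show ?thesis using k T by (simp add: X00 A_def power2_eq_square field_simps)
  next
    case False
    have "A\<^sup>2 * X \<le> A\<^sup>2 * (1 / \<kappa>)"
      using X1 k by (intro mult_left_mono) (simp_all add: field_simps)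
    then have "A\<^sup>2 * X + real T * A\<^sup>2 \<le> A\<^sup>2 * (1 / \<kappa>) + real T * A\<^sup>2" by simp
    also have "\<dots> = L\<^sup>2 / (\<kappa> * real T) * (1 + 1 / (\<kappa> * real T)) / \<kappa>"
      using k T by (simp add: A_def power2_eq_square field_simps)
    finally show ?thesis using False by simp
  qed
  finally show ?thesis by (simp add: D_def mq)
qed


theorem theorem2:
  fixes K :: "'a::polish_space \<Rightarrow> 'a measure"
    and \<kappa> :: real and T T0 :: nat and f :: "'a \<Rightarrow> real" and x :: 'a
  assumes K_meas: "K \<in> borel \<rightarrow>\<^sub>M prob_algebra borel"
    and first_moment: "\<And>y. (\<integral>\<^sup>+ z. ennreal (dist y z) \<partial>K y) < \<top>"
    and kappa_pos: "\<kappa> > 0"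
    and contraction: "\<And>y z. enn2ereal (W1 (K y) (K z)) \<le> ereal ((1 - \<kappa>) * dist y z)"
    and T_ge: "T \<ge> 1"
    and sup_fin: "(SUP y. coarse_sigma2 K y / local_dim K y) < \<top>"
    and sigma_fin: "\<And>y. coarse_sigma2 K y < \<top>"
    and f_lip: "\<exists>C. C-lipschitz_on UNIV f"
  shows "ennreal (var (path K x (T0 + T))
            (\<lambda>\<omega>. (1 / real T) * (\<Sum>k\<in>{T0+1..T0+T}. f (\<omega> k))))
         \<le> ennreal ((lip_norm f)\<^sup>2 / (\<kappa> * real T)
                    * (if T0 = 0 then 1 else 1 + 1 / (\<kappa> * real T)) / \<kappa>)
           * (SUP y. coarse_sigma2 K y / local_dim K y)"
proof -
  define S where "S = (SUP y. coarse_sigma2 K y / local_dim K y)"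
  define L where "L = \<bar>lip_norm f\<bar>"
  define n where "n = T0 + T"
  define R where "R = {T0+1..T0+T}"
  define B where "B = (lip_norm f)\<^sup>2 / (\<kappa> * real T) * (if T0 = 0 then 1 else 1 + 1 / (\<kappa> * real T)) / \<kappa>"
  obtain C where "C-lipschitz_on UNIV f" using f_lip by blast
  then have lf: "L-lipschitz_on UNIV f" unfolding L_def by (rule lip_norm_lip)
  have L0: "0 \<le> L" by (simp add: L_def)
  define g where "g = (\<lambda>k z. if k \<in> R then f z / real T else 0)"
  define c where "c = (\<lambda>k. if k \<in> R then L / real T else 0)"
  have Tp: "0 < real T" using T_ge by simp
  have lg: "\<forall>k\<le>n. (c k)-lipschitz_on UNIV (g k)"
  proof (intro allI impI)
    fix k assume "k \<le> n"
    show "(c k)-lipschitz_on UNIV (g k)"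
    proof (cases "k \<in> R")
      case True
      show ?thesis
      proof (rule lipschitz_onI)
        fix a b :: 'a
        have "dist (f a) (f b) \<le> L * dist a b" using lipschitz_onD[OF lf] by auto
        then have "dist (f a) (f b) / real T \<le> L * dist a b / real T"
          using Tp by (simp add: divide_right_mono)
        then show "dist (g k a) (g k b) \<le> c k * dist a b"
          using True Tp by (simp add: g_def c_def dist_real_def diff_divide_distrib[symmetric] abs_div)
      next
        show "0 \<le> c k" using L0 Tp by (simp add: c_def)
      qed
    next
      case False
      then show ?thesis by (intro lipschitz_onI) (auto simp: g_def c_def)
    qed
  qed
  obtain a where a: "(\<integral>\<^sup>+\<omega>. ennreal (((\<Sum>k\<le>n. g k (\<omega> k)) - a)\<^sup>2) \<partial>path K x n)
      \<le> S * ennreal (\<Sum>j\<in>{1..n}. (\<Sum>k\<in>{j..n}. (max 0 (1 - \<kappa>))^(k-j) * c k)\<^sup>2)"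
    using main[OF K_meas first_moment contraction sigma_fin lg, of x] unfolding S_def by blast
  have feq: "(\<lambda>\<omega>. (1 / real T) * (\<Sum>k\<in>{T0+1..T0+T}. f (\<omega> k))) = (\<lambda>\<omega>. \<Sum>k\<le>n. g k (\<omega> k))"
  proof
    fix \<omega> :: "nat \<Rightarrow> 'a"
    have "(\<Sum>k\<le>n. g k (\<omega> k)) = (\<Sum>k\<le>n. if k \<in> R then f (\<omega> k) / real T else 0)"
      by (simp add: g_def)
    also have "\<dots> = (\<Sum>k\<in>{..n} \<inter> R. f (\<omega> k) / real T)"
      by (rule sum.inter_restrict[symmetric]) simp
    also have "{..n} \<inter> R = R" by (auto simp: R_def n_def)
    finally show "(1 / real T) * (\<Sum>k\<in>{T0+1..T0+T}. f (\<omega> k)) = (\<Sum>k\<le>n. g k (\<omega> k))"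
      by (simp add: R_def sum_divide_distrib)
  qed
  have ps: "path K x n \<in> space (prob_algebra (PiM {0..n} (\<lambda>_. borel)))" by (rule path_space[OF K_meas])
  then have sets_p: "sets (path K x n) = sets (PiM {0..n} (\<lambda>_. borel))" and pp: "prob_space (path K x n)"
    by (auto simp: space_prob_algebra)
  have Gm: "(\<lambda>\<omega>. \<Sum>k\<le>n. g k (\<omega> k)) \<in> borel_measurable (path K x n)"
    using sum_meas[OF lg order.refl] measurable_cong_sets[OF sets_p refl] by blast
  have "ennreal (var (path K x (T0 + T)) (\<lambda>\<omega>. (1 / real T) * (\<Sum>k\<in>{T0+1..T0+T}. f (\<omega> k))))
      = ennreal (var (path K x n) (\<lambda>\<omega>. \<Sum>k\<le>n. g k (\<omega> k)))"
    unfolding feq n_def by (rule refl)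
  also have "\<dots> \<le> (\<integral>\<^sup>+\<omega>. ennreal (((\<Sum>k\<le>n. g k (\<omega> k)) - a)\<^sup>2) \<partial>path K x n)"
    by (rule var_le[OF pp Gm])
  also note a
  also have "S * ennreal (\<Sum>j\<in>{1..n}. (\<Sum>k\<in>{j..n}. (max 0 (1 - \<kappa>))^(k-j) * c k)\<^sup>2) \<le> ennreal B * S"
  proof (cases "\<kappa> \<le> 1")
    case True
    have "(\<Sum>j\<in>{1..n}. (\<Sum>k\<in>{j..n}. (max 0 (1 - \<kappa>))^(k-j) * c k)\<^sup>2) \<le> B"
      using final_alg[OF kappa_pos True T_ge L0, of T0]
      by (simp add: n_def c_def R_def B_def L_def)
    then have "S * ennreal (\<Sum>j\<in>{1..n}. (\<Sum>k\<in>{j..n}. (max 0 (1 - \<kappa>))^(k-j) * c k)\<^sup>2) \<le> S * ennreal B"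
      by (intro mult_left_mono ennreal_leI) auto
    then show ?thesis by (simp add: mult.commute)
  next
    case False
    have d0: "dist y z = 0" for y z :: 'a
    proof -
      have "0 \<le> (1 - \<kappa>) * dist y z" using W1_le[OF K_meas first_moment contraction, of y z] by simp
      then show ?thesis using False by (simp add: zero_le_mult_iff)
    qed
    have "coarse_sigma2 K y = 0" for y by (simp add: coarse_sigma2_def dsq_def d0)
    then have "S = 0" by (simp add: S_def)
    then show ?thesis by simp
  qed
  finally show ?thesis by (simp add: B_def S_def)
qed


end
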